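(* Let $A$ be an uncountable abelian Polish group. Then at least one of the following holds: (1) $\ell^1(\mathbb Z)\sqsubseteq^{\mathbb Z}A$; (2) $(\mathbb Z/p\mathbb Z)^{\mathbb N}\sqsubseteq^{\mathbb Z}A$ for some prime $p$.
   Context: $\mathbb Z$ carries the usual absolute value (a proper norm) and the discrete topology; abelian Polish groups are Polish $\mathbb Z$-modules. $M\sqsubseteq^{\mathbb Z}N$ means there is a continuous group homomorphism $M\to N$ which is injective. $\ell^1(\mathbb Z)=\{(n_k)_{k\in\mathbb N}\in\mathbb Z^{\mathbb N}:\sum_k|n_k|/k!<\infty\}$ with the norm $\sum_k|n_k|/k!$ (and associated metric topology). $(\mathbb Z/p\mathbb Z)^{\mathbb N}$ has the product topology. *)

theory Defs
  imports "HOL-Analysis.Analysis"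
begin

definition ell1Z :: "(nat \<Rightarrow> int) set" where
  "ell1Z = {n. summable (\<lambda>k. real_of_int \<bar>n k\<bar> / fact k)}"

definition ell1_norm :: "(nat \<Rightarrow> int) \<Rightarrow> real" where
  "ell1_norm n = (\<Sum>k. real_of_int \<bar>n k\<bar> / fact k)"

definition ell1Z_embeds :: "('a::{topological_space, ab_group_add}) itself \<Rightarrow> bool" where
  "ell1Z_embeds _ \<longleftrightarrow> (\<exists>f :: (nat \<Rightarrow> int) \<Rightarrow> 'a.
      (\<forall>x\<in>ell1Z. \<forall>y\<in>ell1Z. f (\<lambda>k. x k + y k) = f x + f y) \<and>
      inj_on f ell1Z \<and>
      (\<forall>x\<in>ell1Z. \<forall>U. open U \<and> f x \<in> U \<longrightarrow>
          (\<exists>d>0. \<forall>y\<in>ell1Z. ell1_norm (\<lambda>k. y k - x k) < d \<longrightarrow> f y \<in> U)))"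

text \<open>(Z/pZ)^N, realised as sequences with values in {0..<p}, addition pointwise mod p,
  and the product topology of discrete topologies.\<close>

definition ZpN :: "int \<Rightarrow> (nat \<Rightarrow> int) set" where
  "ZpN p = PiE UNIV (\<lambda>_. {0..<p})"

definition ZpN_add :: "int \<Rightarrow> (nat \<Rightarrow> int) \<Rightarrow> (nat \<Rightarrow> int) \<Rightarrow> (nat \<Rightarrow> int)" where
  "ZpN_add p x y = (\<lambda>k. (x k + y k) mod p)"

definition ZpN_topology :: "int \<Rightarrow> (nat \<Rightarrow> int) topology" where
  "ZpN_topology p = product_topology (\<lambda>_. discrete_topology {0..<p}) UNIV"

definition ZpN_embeds :: "int \<Rightarrow> ('a::{topological_space, ab_group_add}) itself \<Rightarrow> bool" where
  "ZpN_embeds p _ \<longleftrightarrow> (\<exists>f :: (nat \<Rightarrow> int) \<Rightarrow> 'a.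
      (\<forall>x\<in>ZpN p. \<forall>y\<in>ZpN p. f (ZpN_add p x y) = f x + f y) \<and>
      inj_on f (ZpN p) \<and>
      continuous_map (ZpN_topology p) euclidean f)"

definition topological_group_ax :: "('a::{topological_space, ab_group_add}) itself \<Rightarrow> bool" where
  "topological_group_ax _ \<longleftrightarrow>
     continuous_on UNIV (\<lambda>z::'a \<times> 'a. fst z + snd z) \<and> continuous_on UNIV (uminus :: 'a \<Rightarrow> 'a)"

end

theory Submission
  imports Defs
begin


fun nsc :: "nat \<Rightarrow> 'a::ab_group_add \<Rightarrow> 'a" where
  "nsc 0 x = 0" | "nsc (Suc n) x = x + nsc n x"

definition zsc :: "int \<Rightarrow> 'a::ab_group_add \<Rightarrow> 'a" where
  "zsc m x = nsc (nat m) x - nsc (nat (-m)) x"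

lemma nsc_add: "nsc (m+n) x = nsc m x + nsc n x"
  by (induction m) (auto simp: algebra_simps)
lemma nsc_plus: "nsc n (x+y) = nsc n x + nsc n y"
  by (induction n) (auto simp: algebra_simps)
lemma nsc_0[simp]: "nsc n 0 = 0"
  by (induction n) auto
lemma nsc_minus: "nsc n (-x) = - nsc n x"
  by (induction n) (auto simp: algebra_simps)
lemma nsc_diff: "nsc n (x-y) = nsc n x - nsc n y"
  by (metis diff_conv_add_uminus nsc_minus nsc_plus)
lemma nsc_mult: "nsc (m*n) x = nsc m (nsc n x)"
  by (induction m) (auto simp: nsc_add nsc_plus)

lemma zsc_nat_diff: "zsc (int i - int j) x = nsc i x - nsc j x"
proof (cases "j \<le> i")
  case True
  have ij: "i - j + j = i" using True by simp
  have "nsc i x = nsc (i-j) x + nsc j x" using nsc_add[of "i-j" j x] unfolding ij .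
  moreover have "nat (int i - int j) = i - j" "nat (- (int i - int j)) = 0" using True by auto
  ultimately show ?thesis by (simp add: zsc_def)
next
  case False
  have ji: "j - i + i = j" using False by simp
  have "nsc j x = nsc (j-i) x + nsc i x" using nsc_add[of "j-i" i x] unfolding ji .
  moreover have "nat (int i - int j) = 0" "nat (- (int i - int j)) = j - i" using False by auto
  ultimately show ?thesis by (simp add: zsc_def)
qed

lemma int_as_diff: obtains i j where "(m::int) = int i - int j"
  using int_diff_cases by blast

lemma zsc_add: "zsc (a+b) x = zsc a x + zsc b x"
proof -
  obtain i j where a: "a = int i - int j" by (rule int_as_diff)
  obtain k l where b: "b = int k - int l" by (rule int_as_diff)
  have "a + b = int (i+k) - int (j+l)" using a b by simp
  then have "zsc (a+b) x = nsc (i+k) x - nsc (j+l) x" by (simp only: zsc_nat_diff)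
  then show ?thesis using a b by (simp add: zsc_nat_diff nsc_add)
qed

lemma zsc_plus: "zsc m (x+y) = zsc m x + zsc m y"
  by (simp add: zsc_def nsc_plus)
lemma zsc_0[simp]: "zsc m 0 = 0" by (simp add: zsc_def)
lemma zsc_zero[simp]: "zsc 0 x = 0" by (simp add: zsc_def)
lemma zsc_one[simp]: "zsc 1 x = x" by (simp add: zsc_def)
lemma zsc_uminus: "zsc m (-x) = - zsc m x" by (simp add: zsc_def nsc_minus)
lemma zsc_diff: "zsc m (x-y) = zsc m x - zsc m y"
  by (simp add: zsc_def nsc_diff)
lemma zsc_neg: "zsc (-m) x = - zsc m x" by (simp add: zsc_def)

lemma zsc_mult: "zsc (a*b) x = zsc a (zsc b x)"
proof -
  obtain i j where a: "a = int i - int j" by (rule int_as_diff)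
  obtain k l where b: "b = int k - int l" by (rule int_as_diff)
  have "a * b = int (i*k + j*l) - int (i*l + j*k)" unfolding a b by (simp add: algebra_simps)
  then have "zsc (a*b) x = nsc (i*k + j*l) x - nsc (i*l + j*k) x" by (simp only: zsc_nat_diff)
  then show ?thesis using a b
    by (simp add: zsc_nat_diff nsc_add nsc_diff nsc_mult)
qed

lemma zsc_sum: "zsc m (sum f A) = sum (\<lambda>i. zsc m (f i)) A"
  by (induction A rule: infinite_finite_induct) (auto simp: zsc_plus)

lemma zsc_mod: assumes "zsc p x = 0" shows "zsc (m mod p) x = zsc m x"
proof -
  have "zsc m x = zsc (m mod p + (m div p) * p) x" by simp
  also have "\<dots> = zsc (m mod p) x + zsc ((m div p) * p) x" by (rule zsc_add)
  also have "zsc ((m div p) * p) x = zsc (m div p) (zsc p x)" by (rule zsc_mult)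
  finally have "zsc m x = zsc (m mod p) x + zsc (m div p) (zsc p x)" .
  then show ?thesis using assms by simp
qed

lemma zsc_coprime: assumes "zsc p x = 0" "zsc m x = 0" "coprime m p" shows "x = 0"
proof -
  obtain u v where "u * m + v * p = gcd m p" using bezout_int by blast
  then have e: "u * m + v * p = 1" using assms(3) by simp
  have "x = zsc (u * m + v * p) x" by (simp add: e)
  also have "\<dots> = 0" by (simp add: zsc_add zsc_mult assms)
  finally show ?thesis .
qed



context
  fixes dummy :: "'a::{polish_space, ab_group_add} itself"
  assumes tg: "topological_group_ax TYPE('a)"
begin

lemma tg_add: "((f::_\<Rightarrow>'a) \<longlongrightarrow> a) F \<Longrightarrow> (g \<longlongrightarrow> b) F \<Longrightarrow> ((\<lambda>x. f x + g x) \<longlongrightarrow> a + b) F"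
proof -
  assume f: "(f \<longlongrightarrow> a) F" and g: "(g \<longlongrightarrow> b) F"
  have c: "continuous_on UNIV (\<lambda>z::'a\<times>'a. fst z + snd z)" using tg by (simp add: topological_group_ax_def)
  have "isCont (\<lambda>z::'a\<times>'a. fst z + snd z) (a,b)"
    using c continuous_on_eq_continuous_at open_UNIV by blast
  from isCont_tendsto_compose[OF this tendsto_Pair[OF f g]] show ?thesis by simp
qed

lemma tg_uminus: "((f::_\<Rightarrow>'a) \<longlongrightarrow> a) F \<Longrightarrow> ((\<lambda>x. - f x) \<longlongrightarrow> - a) F"
proof -
  assume f: "(f \<longlongrightarrow> a) F"
  have c: "continuous_on UNIV (uminus::'a\<Rightarrow>'a)" using tg by (simp add: topological_group_ax_def)
  have "isCont (uminus::'a\<Rightarrow>'a) a"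
    using c continuous_on_eq_continuous_at open_UNIV by blast
  from isCont_tendsto_compose[OF this f] show ?thesis by simp
qed

lemma tg_diff: "((f::_\<Rightarrow>'a) \<longlongrightarrow> a) F \<Longrightarrow> (g \<longlongrightarrow> b) F \<Longrightarrow> ((\<lambda>x. f x - g x) \<longlongrightarrow> a - b) F"
  using tg_add[of f a F "\<lambda>x. - g x" "-b"] tg_uminus[of g b F] by simp

lemma tg_nsc: "((f::_\<Rightarrow>'a) \<longlongrightarrow> a) F \<Longrightarrow> ((\<lambda>x. nsc n (f x)) \<longlongrightarrow> nsc n a) F"
  by (induction n) (auto intro: tg_add)

lemma tg_zsc: "((f::_\<Rightarrow>'a) \<longlongrightarrow> a) F \<Longrightarrow> ((\<lambda>x. zsc m (f x)) \<longlongrightarrow> zsc m a) F"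
  unfolding zsc_def by (intro tg_diff tg_nsc)

lemma open_pre: 
  assumes "continuous_on UNIV (g::'a\<Rightarrow>'a)" "open U"
  shows "open {x::'a. g x \<in> U}"
proof -
  have "open (g -` U \<inter> UNIV)" using continuous_on_open_vimage[OF open_UNIV] assms by blast
  then show ?thesis by (simp add: vimage_def)
qed

lemma cont_zsc: "continuous_on UNIV (zsc m :: 'a \<Rightarrow> 'a)"
  unfolding continuous_on_def by (auto intro: tg_zsc tendsto_ident_at)

lemma cont_transl: "continuous_on UNIV (\<lambda>x::'a. x + c)"
  unfolding continuous_on_def by (auto intro!: tg_add tendsto_ident_at)

lemma open_zsc_pre: "open U \<Longrightarrow> open {x::'a. zsc m x \<in> U}"
  using open_pre[OF cont_zsc] by blast

lemma open_transl_pre: "open U \<Longrightarrow> open {x::'a. x + c \<in> U}"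
  using open_pre[OF cont_transl] by blast

lemma half_nbhd:
  assumes "open (W::'a set)" "0 \<in> W"
  obtains U where "open U" "0 \<in> U" "\<And>y z. y \<in> U \<Longrightarrow> z \<in> U \<Longrightarrow> y + z \<in> W"
proof -
  have c: "continuous_on UNIV (\<lambda>z::'a\<times>'a. fst z + snd z)" using tg by (simp add: topological_group_ax_def)
  then have "open ((\<lambda>z::'a\<times>'a. fst z + snd z) -` W \<inter> UNIV)"
    using continuous_on_open_vimage[OF open_UNIV] assms(1) by blast
  moreover have "(0,0) \<in> (\<lambda>z::'a\<times>'a. fst z + snd z) -` W \<inter> UNIV" using assms(2) by simp
  ultimately obtain A B where AB: "open A" "open B" "(0,0) \<in> A \<times> B"
     "A \<times> B \<subseteq> (\<lambda>z::'a\<times>'a. fst z + snd z) -` W \<inter> UNIV" by (rule open_prod_elim)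
  have "y + z \<in> W" if "y \<in> A \<inter> B" "z \<in> A \<inter> B" for y z
  proof -
    have "(y,z) \<in> A \<times> B" using that by auto
    then show ?thesis using AB(4) by auto
  qed
  moreover have "open (A \<inter> B)" using AB by auto
  moreover have "0 \<in> A \<inter> B" using AB by auto
  ultimately show ?thesis using that by blast
qed

lemma open_dist_set:
  assumes "finite F" 
  shows "open {w::'a. \<forall>s\<in>F. dist (s + w) s < r}"
proof -
  have "{w::'a. \<forall>s\<in>F. dist (s + w) s < r} = (\<Inter>s\<in>F. {w. w + s \<in> ball s r})"
    by (auto simp: dist_commute add.commute)
  also have "open \<dots>"
  proof (rule open_INT[OF assms], rule ballI)
    fix s :: 'a show "open {w::'a. w + s \<in> ball s r}" by (rule open_transl_pre[OF open_ball])
  qed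
  finally show ?thesis .
qed

lemma uncountable_open:
  fixes H :: "'a set"
  assumes sub: "\<And>x y. x \<in> H \<Longrightarrow> y \<in> H \<Longrightarrow> x - y \<in> H" and unc: "uncountable H"
    and U: "open U" "u \<in> U" "u \<in> H"
  shows "uncountable (U \<inter> H)"
proof
  assume cU: "countable (U \<inter> H)"
  obtain B :: "'a set set" where B: "countable B" "topological_basis B" using ex_countable_basis by blast
  define C where "C = (\<Union>b\<in>{b\<in>B. countable (b \<inter> H)}. b \<inter> H)"
  have "countable C" unfolding C_def
    by (rule countable_UN) (use B(1) in \<open>auto intro: countable_subset\<close>)
  then have "H - C \<noteq> {}" using unc by (metis countable_subset Diff_eq_empty_iff)
  then obtain x where x: "x \<in> H" "x \<notin> C" by blast
  define V where "V = {z. z + (u - x) \<in> U}"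
  have oV: "open V" unfolding V_def by (rule open_transl_pre[OF U(1)])
  have xV: "x \<in> V" using U(2) by (simp add: V_def)
  have "countable (V \<inter> H)"
  proof (rule countable_subset)
    show "V \<inter> H \<subseteq> (\<lambda>w. w - (u - x)) ` (U \<inter> H)"
    proof
      fix z assume z: "z \<in> V \<inter> H"
      have "u - x \<in> H" using sub U(3) x(1) by blast
      have m: "0 - (u-x) \<in> H" using sub `u - x \<in> H` by (metis diff_self)
      have h1: "z - (0 - (u - x)) \<in> H" using sub[OF _ m] z by blast
      then have "z + (u - x) \<in> H" by (simp only: diff_0 diff_minus_eq_add)
      then have "z + (u - x) \<in> U \<inter> H" using z by (auto simp: V_def)
      then show "z \<in> (\<lambda>w. w - (u - x)) ` (U \<inter> H)" by (rule rev_image_eqI) simp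
    qed
    show "countable ((\<lambda>w. w - (u - x)) ` (U \<inter> H))" using cU by simp
  qed
  obtain b where b: "b \<in> B" "x \<in> b" "b \<subseteq> V" using topological_basisE[OF B(2) oV xV] by blast
  have "countable (b \<inter> H)" using `countable (V \<inter> H)` b(3) by (meson countable_subset inf_mono order_refl)
  then have "x \<in> C" using b x unfolding C_def by blast
  with x show False by simp
qed

end


definition Ssum :: "(nat \<Rightarrow> 'a::ab_group_add) \<Rightarrow> (nat \<Rightarrow> int) \<Rightarrow> nat \<Rightarrow> 'a" where
  "Ssum a n K = (\<Sum>i<K. zsc (n i) (a i))"

definition Fset :: "(nat \<Rightarrow> 'a::ab_group_add) \<Rightarrow> nat \<Rightarrow> 'a set" where
  "Fset a K = (\<lambda>m. Ssum a m K) ` (PiE {..<K} (\<lambda>i. {- (int K * fact i) .. int K * fact i}))"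

definition rad :: "(nat \<Rightarrow> 'a::{ab_group_add,metric_space}) \<Rightarrow> nat \<Rightarrow> real" where
  "rad a K = Min (insert ((1/2)^K) ((\<lambda>s. dist s 0 / 2) ` (Fset a K - {0})))"

definition Gset :: "(nat \<Rightarrow> 'a::ab_group_add) \<Rightarrow> nat \<Rightarrow> 'a set" where
  "Gset a K = (\<lambda>m. Ssum a m K) ` (PiE {..<K} (\<lambda>_. UNIV))"

definition Bad :: "'a::ab_group_add set \<Rightarrow> 'a set" where
  "Bad G = {x. \<exists>m. zsc m x \<noteq> 0 \<and> zsc m x \<in> G}"

lemma Ssum_cong: "(\<And>i. i < K \<Longrightarrow> a i = b i) \<Longrightarrow> (\<And>i. i < K \<Longrightarrow> n i = m i) \<Longrightarrow> Ssum a n K = Ssum b m K"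
  unfolding Ssum_def by (rule sum.cong) auto

lemma Fset_cong: "(\<And>i. i < K \<Longrightarrow> a i = b i) \<Longrightarrow> Fset a K = Fset b K"
  unfolding Fset_def by (intro image_cong refl Ssum_cong) auto

lemma rad_cong: "(\<And>i. i < K \<Longrightarrow> a i = b i) \<Longrightarrow> rad a K = rad b K"
  unfolding rad_def using Fset_cong by metis

lemma Gset_cong: "(\<And>i. i < K \<Longrightarrow> a i = b i) \<Longrightarrow> Gset a K = Gset b K"
  unfolding Gset_def by (intro image_cong refl Ssum_cong) auto

lemma finite_Fset: "finite (Fset a K)"
  unfolding Fset_def by (intro finite_imageI finite_PiE) auto

lemma countable_Gset: "countable (Gset a K)"
  unfolding Gset_def by (intro countable_image countable_PiE) auto

lemma rad_pos: "rad a K > 0"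
  unfolding rad_def using finite_Fset by (subst Min_gr_iff) auto

lemma rad_le: "rad a K \<le> (1/2)^K"
  unfolding rad_def using finite_Fset by (intro Min_le) auto

lemma rad_lt: "s \<in> Fset a K \<Longrightarrow> s \<noteq> 0 \<Longrightarrow> rad a K < dist s 0"
proof -
  assume "s \<in> Fset a K" "s \<noteq> 0"
  then have "rad a K \<le> dist s 0 / 2" unfolding rad_def using finite_Fset by (intro Min_le) auto
  moreover have "dist s 0 > 0" using `s \<noteq> 0` by simp
  ultimately show ?thesis by linarith
qed

lemma Ssum_in_Fset:
  assumes "\<And>i. \<bar>n i\<bar> \<le> int K * fact i"
  shows "Ssum a n K \<in> Fset a K"
proof -
  have "Ssum a n K = Ssum a (restrict n {..<K}) K" by (rule Ssum_cong) auto
  moreover have "restrict n {..<K} \<in> PiE {..<K} (\<lambda>i. {- (int K * fact i) .. int K * fact i})"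
  proof -
    have "- (int K * fact i) \<le> n i \<and> n i \<le> int K * fact i" for i using assms[of i] by (simp add: abs_le_iff)
    then show ?thesis by auto
  qed
  ultimately show ?thesis unfolding Fset_def by blast
qed

lemma Ssum_in_Gset: "Ssum a n K \<in> Gset a K"
proof -
  have "Ssum a n K = Ssum a (restrict n {..<K}) K" by (rule Ssum_cong) auto
  moreover have "restrict n {..<K} \<in> PiE {..<K} (\<lambda>_. UNIV)" by auto
  ultimately show ?thesis unfolding Gset_def by blast
qed

lemma indep:
  assumes "\<And>k. a k \<notin> Bad (Gset a k)"
  shows "Ssum a m K = 0 \<Longrightarrow> \<forall>i<K. zsc (m i) (a i) = 0"
proof (induction K)
  case 0 then show ?case by simp
next
  case (Suc K)
  have e: "Ssum a m (Suc K) = Ssum a m K + zsc (m K) (a K)" by (simp add: Ssum_def)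
  have "zsc (m K) (a K) = Ssum a (\<lambda>i. - m i) K"
    using Suc.prems e by (simp add: Ssum_def zsc_neg sum_negf eq_neg_iff_add_eq_0 add.commute)
  then have "zsc (m K) (a K) \<in> Gset a K" using Ssum_in_Gset by metis
  then have z: "zsc (m K) (a K) = 0" using assms[of K] by (auto simp: Bad_def)
  then have "Ssum a m K = 0" using e Suc.prems by simp
  with Suc.IH z show ?case using less_Suc_eq by auto
qed



definition stepP :: "'a::{metric_space,ab_group_add} set \<Rightarrow> 'a set \<Rightarrow> (nat \<Rightarrow> 'a) \<Rightarrow> nat \<Rightarrow> 'a set \<Rightarrow> 'a \<Rightarrow> 'a set \<Rightarrow> bool" where
  "stepP H T a K W x W' \<longleftrightarrow> x \<in> H \<and> x \<notin> T \<and> x \<notin> Bad (Gset a K) \<and> open W' \<and> 0 \<in> W' \<and>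
     (\<forall>w\<in>W'. \<forall>s\<in>Fset (a(K:=x)) (Suc K). dist (s+w) s < rad (a(K:=x)) (Suc K)) \<and>
     (\<forall>y\<in>W'. \<forall>m. \<bar>m\<bar> \<le> int K * fact K \<longrightarrow> zsc m x + y \<in> W)"

definition W0 :: "'a::{metric_space,ab_group_add} set" where
  "W0 = {w. \<forall>s\<in>Fset (\<lambda>_. 0::'a) 0. dist (s+w) s < rad (\<lambda>_. 0::'a) 0}"

primrec st :: "'a::{metric_space,ab_group_add} set \<Rightarrow> 'a set \<Rightarrow> nat \<Rightarrow> (nat \<Rightarrow> 'a) \<times> 'a set" where
  "st H T 0 = ((\<lambda>_. 0), W0)"
| "st H T (Suc K) = (let a = fst (st H T K); W = snd (st H T K);
      xw = (SOME xw. stepP H T a K W (fst xw) (snd xw)) in (a(K := fst xw), snd xw))"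

context
  fixes dummy :: "'a::{polish_space, ab_group_add} itself"
  assumes tg: "topological_group_ax TYPE('a)"
begin

lemma step_ex:
  fixes H T :: "'a set"
  assumes H0: "\<And>U. open U \<Longrightarrow> 0 \<in> U \<Longrightarrow> uncountable (U \<inter> H)"
    and cT: "countable T" and cB: "countable (H \<inter> Bad (Gset a K))"
    and W: "open W" "0 \<in> W"
  shows "\<exists>x W'. stepP H T a K W x W'"
proof -
  obtain U :: "'a set" where U: "open U" "0 \<in> U" "\<And>y z. y \<in> U \<Longrightarrow> z \<in> U \<Longrightarrow> y + z \<in> W"
    using half_nbhd[OF tg W] by blast
  define B where "B = int K * fact K"
  define M where "M = (\<Inter>m\<in>{-B..B}. {x. zsc m x \<in> U})"
  have oM: "open M" unfolding M_def
  proof (rule open_INT, simp, rule ballI)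
    fix m show "open {x::'a. zsc m x \<in> U}" by (rule open_zsc_pre[OF tg U(1)])
  qed
  have M0: "0 \<in> M" using U(2) by (simp add: M_def)
  have "uncountable (M \<inter> H)" using H0[OF oM M0] .
  then have "(M \<inter> H) - (T \<union> (H \<inter> Bad (Gset a K))) \<noteq> {}"
    using cT cB by (metis countable_Un countable_subset Diff_eq_empty_iff)
  then obtain x where x: "x \<in> M" "x \<in> H" "x \<notin> T" "x \<notin> Bad (Gset a K)" by blast
  define W' where "W' = U \<inter> {w. \<forall>s\<in>Fset (a(K:=x)) (Suc K). dist (s+w) s < rad (a(K:=x)) (Suc K)}"
  have "open W'" unfolding W'_def by (intro open_Int U(1) open_dist_set[OF tg] finite_Fset)
  moreover have "0 \<in> W'" unfolding W'_def using U(2) rad_pos by auto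
  moreover have "\<forall>y\<in>W'. \<forall>m. \<bar>m\<bar> \<le> int K * fact K \<longrightarrow> zsc m x + y \<in> W"
  proof (intro ballI allI impI)
    fix y m assume y: "y \<in> W'" and m: "\<bar>m\<bar> \<le> int K * fact K"
    have "zsc m x \<in> U" using x(1) m unfolding M_def B_def by (auto simp: abs_le_iff)
    moreover have "y \<in> U" using y by (simp add: W'_def)
    ultimately show "zsc m x + y \<in> W" by (rule U(3))
  qed
  ultimately have "stepP H T a K W x W'" unfolding stepP_def using x W'_def by blast
  then show ?thesis by blast
qed

lemma st_inv:
  fixes H T :: "'a set"
  assumes H0: "\<And>U. open U \<Longrightarrow> 0 \<in> U \<Longrightarrow> uncountable (U \<inter> H)"
    and cT: "countable T" and HB: "\<And>G. countable G \<Longrightarrow> countable (H \<inter> Bad G)"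
  shows "open (snd (st H T K)) \<and> 0 \<in> snd (st H T K) \<and>
    (\<forall>w\<in>snd (st H T K). \<forall>s\<in>Fset (fst (st H T K)) K. dist (s+w) s < rad (fst (st H T K)) K) \<and>
    stepP H T (fst (st H T K)) K (snd (st H T K)) (fst (st H T (Suc K)) K) (snd (st H T (Suc K)))"
proof (induction K)
  case 0
  have "open (W0::'a set)" unfolding W0_def by (intro open_dist_set[OF tg] finite_Fset)
  moreover have "0 \<in> (W0::'a set)" unfolding W0_def using rad_pos by auto
  ultimately have A: "open (snd (st H T 0)) \<and> 0 \<in> snd (st H T 0) \<and>
    (\<forall>w\<in>snd (st H T 0). \<forall>s\<in>Fset (fst (st H T 0)) 0. dist (s+w) s < rad (fst (st H T 0)) 0)"
    by (simp add: W0_def)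
  then have "\<exists>x W'. stepP H T (fst (st H T 0)) 0 (snd (st H T 0)) x W'"
    by (intro step_ex H0 cT HB countable_Gset) auto
  then have "stepP H T (fst (st H T 0)) 0 (snd (st H T 0)) (fst (SOME xw. stepP H T (fst (st H T 0)) 0 (snd (st H T 0)) (fst xw) (snd xw))) (snd (SOME xw. stepP H T (fst (st H T 0)) 0 (snd (st H T 0)) (fst xw) (snd xw)))"
    by (metis (mono_tags, lifting) fst_conv snd_conv someI_ex)
  with A show ?case by (simp add: Let_def)
next
  case (Suc K)
  define a where "a = fst (st H T K)"
  define W where "W = snd (st H T K)"
  define xw where "xw = (SOME xw. stepP H T a K W (fst xw) (snd xw))"
  have stS: "st H T (Suc K) = (a(K := fst xw), snd xw)" by (simp add: a_def W_def xw_def Let_def)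
  have P: "stepP H T a K W (fst xw) (snd xw)" using Suc.IH
    by (simp add: a_def W_def xw_def Let_def)
  have A: "open (snd (st H T (Suc K))) \<and> 0 \<in> snd (st H T (Suc K)) \<and>
    (\<forall>w\<in>snd (st H T (Suc K)). \<forall>s\<in>Fset (fst (st H T (Suc K))) (Suc K). dist (s+w) s < rad (fst (st H T (Suc K))) (Suc K))"
    using P unfolding stS stepP_def by simp
  then have "\<exists>x W'. stepP H T (fst (st H T (Suc K))) (Suc K) (snd (st H T (Suc K))) x W'"
    by (intro step_ex H0 cT HB countable_Gset) auto
  then have "stepP H T (fst (st H T (Suc K))) (Suc K) (snd (st H T (Suc K))) (fst (SOME xw. stepP H T (fst (st H T (Suc K))) (Suc K) (snd (st H T (Suc K))) (fst xw) (snd xw))) (snd (SOME xw. stepP H T (fst (st H T (Suc K))) (Suc K) (snd (st H T (Suc K))) (fst xw) (snd xw)))"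
    by (metis (mono_tags, lifting) fst_conv snd_conv someI_ex)
  with A show ?case by (simp add: Let_def del: st.simps(2)) (simp add: Let_def)
qed

end


definition seqa :: "'a::{metric_space,ab_group_add} set \<Rightarrow> 'a set \<Rightarrow> nat \<Rightarrow> 'a" where
  "seqa H T i = fst (st H T (Suc i)) i"

lemma st_prefix: "i < K \<Longrightarrow> fst (st H T K) i = seqa H T i"
proof (induction K)
  case 0 then show ?case by simp
next
  case (Suc K)
  show ?case
  proof (cases "i = K")
    case True then show ?thesis by (simp add: seqa_def)
  next
    case False
    then have "i < K" using Suc.prems by simp
    then show ?thesis using Suc.IH False by (simp add: Let_def)
  qed
qed

context
  fixes dummy :: "'a::{polish_space, ab_group_add} itself"
  assumes tg: "topological_group_ax TYPE('a)"
begin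

lemma construction:
  fixes H T :: "'a set"
  assumes H0: "\<And>U. open U \<Longrightarrow> 0 \<in> U \<Longrightarrow> uncountable (U \<inter> H)"
    and cT: "countable T" and HB: "\<And>G. countable G \<Longrightarrow> countable (H \<inter> Bad G)"
  shows "\<exists>a::nat\<Rightarrow>'a. (\<forall>k. a k \<in> H \<and> a k \<notin> T \<and> a k \<notin> Bad (Gset a k)) \<and>
     (\<forall>n K. (\<forall>i. \<bar>n i\<bar> \<le> int K * fact i) \<longrightarrow> (\<forall>N\<ge>K. dist (Ssum a n N) (Ssum a n K) < rad a K))"
proof -
  define a where "a = seqa H T"
  define W where "W k = snd (st H T k)" for k
  note inv = st_inv[OF tg H0 cT HB]
  have pre: "fst (st H T K) i = a i" if "i < K" for i K using st_prefix[OF that] by (simp add: a_def)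
  have P: "stepP H T (fst (st H T k)) k (W k) (a k) (W (Suc k))" for k
    using inv[of k] by (simp add: W_def a_def seqa_def)
  have P1: "a k \<in> H \<and> a k \<notin> T \<and> a k \<notin> Bad (Gset a k)" for k
  proof -
    have "Gset (fst (st H T k)) k = Gset a k" by (rule Gset_cong) (rule pre)
    then show ?thesis using P[of k] by (simp add: stepP_def)
  qed
  have W0: "0 \<in> W k" for k using inv[of k] by (simp add: W_def)
  have P2: "\<forall>w\<in>W K. \<forall>s\<in>Fset a K. dist (s+w) s < rad a K" for K
  proof -
    have "Fset (fst (st H T K)) K = Fset a K" by (rule Fset_cong) (rule pre)
    moreover have "rad (fst (st H T K)) K = rad a K" by (rule rad_cong) (rule pre)
    ultimately show ?thesis using inv[of K] by (simp add: W_def)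
  qed
  have P3: "\<forall>y\<in>W (Suc k). \<forall>m. \<bar>m\<bar> \<le> int k * fact k \<longrightarrow> zsc m (a k) + y \<in> W k" for k
    using P[of k] by (simp add: stepP_def)
  have tail: "\<And>j. (\<forall>i\<ge>j. \<bar>n i\<bar> \<le> int i * fact i) \<Longrightarrow> (\<Sum>i\<in>{j..<j+l}. zsc (n i) (a i)) \<in> W j" for n l
  proof (induction l)
    case 0 then show ?case using W0 by simp
  next
    case (Suc l)
    have "(\<Sum>i\<in>{j..<j+Suc l}. zsc (n i) (a i)) = zsc (n j) (a j) + (\<Sum>i\<in>{Suc j..<Suc j+l}. zsc (n i) (a i))"
      by (subst sum.atLeast_Suc_lessThan) auto
    moreover have "(\<Sum>i\<in>{Suc j..<Suc j+l}. zsc (n i) (a i)) \<in> W (Suc j)"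
      using Suc.prems by (intro Suc.IH) auto
    moreover have "\<bar>n j\<bar> \<le> int j * fact j" using Suc.prems by auto
    ultimately show ?case using P3[of j] by auto
  qed
  have main: "dist (Ssum a n N) (Ssum a n K) < rad a K"
    if b: "\<forall>i. \<bar>n i\<bar> \<le> int K * fact i" and N: "N \<ge> K" for n K N
  proof -
    have "Ssum a n N = Ssum a n K + (\<Sum>i\<in>{K..<K+(N-K)}. zsc (n i) (a i))"
      unfolding Ssum_def using N
      by (simp add: atLeast0LessThan[symmetric] sum.atLeastLessThan_concat)
    moreover have "(\<Sum>i\<in>{K..<K+(N-K)}. zsc (n i) (a i)) \<in> W K"
    proof (rule tail, intro allI impI)
      fix i assume "i \<ge> K"
      then have "int K * fact i \<le> int i * fact i" by (intro mult_right_mono) auto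
      then show "\<bar>n i\<bar> \<le> int i * fact i" using b by (meson order_trans)
    qed
    moreover have "Ssum a n K \<in> Fset a K" using b by (intro Ssum_in_Fset) auto
    ultimately show ?thesis using P2[of K] by auto
  qed
  show ?thesis using P1 main unfolding a_def by blast
qed

end


context
  fixes dummy :: "'a::{polish_space, ab_group_add} itself"
  assumes tg: "topological_group_ax TYPE('a)"
begin

lemma conv_lemma:
  fixes a :: "nat \<Rightarrow> 'a"
  assumes D: "\<forall>n K. (\<forall>i. \<bar>n i\<bar> \<le> int K * fact i) \<longrightarrow> (\<forall>N\<ge>K. dist (Ssum a n N) (Ssum a n K) < rad a K)"
    and b: "\<forall>i. \<bar>n i\<bar> \<le> int K * fact i"
  shows "(\<lambda>N. Ssum a n N) \<longlonglongrightarrow> lim (\<lambda>N. Ssum a n N)"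
    and "dist (lim (\<lambda>N. Ssum a n N)) (Ssum a n K) \<le> rad a K"
proof -
  have bM: "\<forall>i. \<bar>n i\<bar> \<le> int M * fact i" if "M \<ge> K" for M
  proof
    fix i
    have "int K * fact i \<le> int M * fact i" using that by (intro mult_right_mono) auto
    then show "\<bar>n i\<bar> \<le> int M * fact i" using b by (meson order_trans)
  qed
  have "Cauchy (\<lambda>N. Ssum a n N)"
  proof (rule metric_CauchyI)
    fix e :: real assume e: "0 < e"
    obtain K' where K': "(1/2::real)^K' < e/2" using real_arch_pow_inv[of "e/2" "1/2"] e by auto
    define M where "M = max K K'"
    have "(1/2::real)^M \<le> (1/2)^K'" unfolding M_def by (intro power_decreasing) auto
    then have rM: "rad a M < e/2" using rad_le[of a M] K' by linarith
    have "\<forall>m\<ge>M. \<forall>m'\<ge>M. dist (Ssum a n m) (Ssum a n m') < e"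
    proof (intro allI impI)
      fix m m' assume m: "m \<ge> M" and m': "m' \<ge> M"
      have "dist (Ssum a n m) (Ssum a n m') \<le> dist (Ssum a n m) (Ssum a n M) + dist (Ssum a n m') (Ssum a n M)"
        by (rule dist_triangle2)
      also have "\<dots> < rad a M + rad a M" using D bM[of M] m m' unfolding M_def
        by (intro add_strict_mono) auto
      finally show "dist (Ssum a n m) (Ssum a n m') < e" using rM by linarith
    qed
    then show "\<exists>M. \<forall>m\<ge>M. \<forall>m'\<ge>M. dist (Ssum a n m) (Ssum a n m') < e" by blast
  qed
  then show L: "(\<lambda>N. Ssum a n N) \<longlonglongrightarrow> lim (\<lambda>N. Ssum a n N)"
    using Cauchy_convergent convergent_LIMSEQ_iff by blast
  have "eventually (\<lambda>N. dist (Ssum a n K) (Ssum a n N) \<le> rad a K) sequentially"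
  proof -
    have "\<forall>N\<ge>K. dist (Ssum a n N) (Ssum a n K) < rad a K" using D b by blast
    then show ?thesis unfolding eventually_sequentially by (metis dist_commute less_imp_le)
  qed
  then have "dist (Ssum a n K) (lim (\<lambda>N. Ssum a n N)) \<le> rad a K"
    by (intro Lim_dist_ubound[OF _ L]) auto
  then show "dist (lim (\<lambda>N. Ssum a n N)) (Ssum a n K) \<le> rad a K" by (simp add: dist_commute)
qed

lemma nonzero_lemma:
  fixes a :: "nat \<Rightarrow> 'a"
  assumes D: "\<forall>n K. (\<forall>i. \<bar>n i\<bar> \<le> int K * fact i) \<longrightarrow> (\<forall>N\<ge>K. dist (Ssum a n N) (Ssum a n K) < rad a K)"
    and b: "\<forall>i. \<bar>n i\<bar> \<le> int K * fact i"
    and L: "(\<lambda>N. Ssum a n N) \<longlonglongrightarrow> 0"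
  shows "Ssum a n K = 0"
proof (rule ccontr)
  assume ne: "Ssum a n K \<noteq> 0"
  have "lim (\<lambda>N. Ssum a n N) = 0" using L by (rule limI)
  then have "dist 0 (Ssum a n K) \<le> rad a K" using conv_lemma(2)[OF D b] by simp
  moreover have "rad a K < dist (Ssum a n K) 0" using rad_lt[OF Ssum_in_Fset[OF b[rule_format]] ne] .
  ultimately show False by (simp add: dist_commute)
qed

lemma close_lemma:
  fixes a :: "nat \<Rightarrow> 'a"
  assumes D: "\<forall>n K. (\<forall>i. \<bar>n i\<bar> \<le> int K * fact i) \<longrightarrow> (\<forall>N\<ge>K. dist (Ssum a n N) (Ssum a n K) < rad a K)"
    and bx: "\<forall>i. \<bar>x i\<bar> \<le> int K * fact i" and "\<forall>i. \<bar>y i\<bar> \<le> int K * fact i"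
    and eq: "\<And>i. i < K \<Longrightarrow> x i = y i"
  shows "dist (lim (\<lambda>N. Ssum a x N)) (lim (\<lambda>N. Ssum a y N)) \<le> 2 * (1/2)^K"
proof -
  have "Ssum a x K = Ssum a y K" by (rule Ssum_cong) (auto simp: eq)
  then have "dist (lim (\<lambda>N. Ssum a x N)) (lim (\<lambda>N. Ssum a y N)) \<le> rad a K + rad a K"
    using conv_lemma(2)[OF D bx] conv_lemma(2)[OF D assms(3)] dist_triangle2[of "lim (\<lambda>N. Ssum a x N)" "lim (\<lambda>N. Ssum a y N)" "Ssum a x K"]
    by simp
  then show ?thesis using rad_le[of a K] by simp
qed

end

lemma countable_subsing: "(\<And>x y. x \<in> S \<Longrightarrow> y \<in> S \<Longrightarrow> x = y) \<Longrightarrow> countable S"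
proof -
  assume h: "\<And>x y. x \<in> S \<Longrightarrow> y \<in> S \<Longrightarrow> x = y"
  have "S \<subseteq> {SOME x. x \<in> S}" using h by (metis singletonI some_eq_ex subsetI)
  then show ?thesis by (rule countable_subset) simp
qed

lemma ell1_bound:
  assumes "x \<in> ell1Z"
  shows "\<exists>K::nat. \<forall>i. \<bar>x i\<bar> \<le> int K * fact i"
proof -
  let ?f = "\<lambda>k. real_of_int \<bar>x k\<bar> / fact k"
  have s: "summable ?f" using assms by (simp add: ell1Z_def)
  define K where "K = nat \<lceil>suminf ?f\<rceil>"
  have "\<bar>x i\<bar> \<le> int K * fact i" for i
  proof -
    have "?f i \<le> suminf ?f" using sum_le_suminf[OF s, of "{i}"] by simp
    also have "\<dots> \<le> real K" unfolding K_def by linarith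
    finally have "real_of_int \<bar>x i\<bar> \<le> real K * fact i" by (simp add: divide_le_eq)
    then have "real_of_int \<bar>x i\<bar> \<le> real_of_int (int K * fact i)" by simp
    then show ?thesis by linarith
  qed
  then show ?thesis by blast
qed



lemma fiber_count:
  assumes "countable {x::'a::ab_group_add. zsc m x = 0}"
  shows "countable {x::'a. zsc m x = t}"
proof (cases "{x::'a. zsc m x = t} = {}")
  case True then show ?thesis by simp
next
  case False
  then obtain x0 where x0: "zsc m x0 = t" by blast
  have "{x::'a. zsc m x = t} \<subseteq> (\<lambda>s. x0 + s) ` {x. zsc m x = 0}"
  proof
    fix x assume "x \<in> {x::'a. zsc m x = t}"
    then have "zsc m (x - x0) = 0" using x0 by (simp add: zsc_diff)
    then show "x \<in> (\<lambda>s. x0 + s) ` {x. zsc m x = 0}" by (intro image_eqI[of _ _ "x - x0"]) auto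
  qed
  then show ?thesis using assms by (meson countable_image countable_subset)
qed

lemma tors_count_nat:
  assumes P: "\<forall>p::int. prime p \<longrightarrow> countable {x::'a::ab_group_add. zsc p x = 0}"
  shows "m \<ge> 1 \<Longrightarrow> countable {x::'a. zsc (int m) x = 0}"
proof (induction m rule: less_induct)
  case (less m)
  show ?case
  proof (cases "m = 1")
    case True
    then show ?thesis by simp
  next
    case False
    then obtain q where q: "prime q" "q dvd m" using prime_factor_nat by blast
    then obtain r where r: "m = q * r" by blast
    have "q \<ge> 2" using q(1) prime_ge_2_nat by blast
    then have r1: "r \<ge> 1" "r < m" using less.prems r by (auto simp: Suc_le_eq)
    have Ar: "countable {x::'a. zsc (int r) x = 0}" using less.IH[OF r1(2) r1(1)] .
    have Aq: "countable {x::'a. zsc (int q) x = 0}" using P q(1) by simp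
    have "{x::'a. zsc (int m) x = 0} \<subseteq> (\<Union>t\<in>{x::'a. zsc (int r) x = 0}. {x. zsc (int q) x = t})"
    proof
      fix x :: 'a assume "x \<in> {x. zsc (int m) x = 0}"
      then have "zsc (int r) (zsc (int q) x) = 0" using r zsc_mult[of "int r" "int q" x] by (simp add: mult.commute)
      then show "x \<in> (\<Union>t\<in>{x::'a. zsc (int r) x = 0}. {x. zsc (int q) x = t})" by auto
    qed
    moreover have "countable (\<Union>t\<in>{x::'a. zsc (int r) x = 0}. {x. zsc (int q) x = t})"
      using Ar fiber_count[OF Aq] by (intro countable_UN) auto
    ultimately show ?thesis by (rule countable_subset)
  qed
qed

lemma tors_count:
  assumes P: "\<forall>p::int. prime p \<longrightarrow> countable {x::'a::ab_group_add. zsc p x = 0}" and m: "m \<noteq> 0"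
  shows "countable {x::'a. zsc m x = 0}"
proof (cases "m > 0")
  case True
  then have "m = int (nat m)" "nat m \<ge> 1" by auto
  then show ?thesis using tors_count_nat[OF P] by metis
next
  case False
  then have e: "m = - int (nat (-m))" "nat (-m) \<ge> 1" using m by auto
  have "{x::'a. zsc m x = 0} = {x::'a. zsc (int (nat (-m))) x = 0}"
    by (subst e(1)) (auto simp: zsc_neg)
  then show ?thesis using tors_count_nat[OF P e(2)] by simp
qed



context
  fixes dummy :: "'a::{polish_space, ab_group_add} itself"
  assumes tg: "topological_group_ax TYPE('a)"
begin

lemma case2:
  assumes p: "prime (p::int)" and unc: "uncountable {x::'a. zsc p x = 0}"
  shows "ZpN_embeds p TYPE('a)"
proof -
  define H where "H = {x::'a. zsc p x = 0}"
  have sub: "x - y \<in> H" if "x \<in> H" "y \<in> H" for x y using that by (simp add: H_def zsc_diff)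
  have H0: "uncountable (U \<inter> H)" if "open U" "0 \<in> U" for U
    using uncountable_open[OF tg sub, of U 0] unc that by (auto simp: H_def)
  have cT: "countable {0::'a}" by simp
  have HB: "countable (H \<inter> Bad G)" if G: "countable G" for G
  proof -
    have "H \<inter> Bad G \<subseteq> (\<Union>m\<in>UNIV. \<Union>s\<in>G. {x\<in>H. zsc m x = s \<and> s \<noteq> 0})"
      by (auto simp: Bad_def)
    moreover have "countable {x\<in>H. zsc m x = s \<and> s \<noteq> 0}" for m s
    proof (rule countable_subsing)
      fix x y assume x: "x \<in> {x\<in>H. zsc m x = s \<and> s \<noteq> 0}" and y: "y \<in> {x\<in>H. zsc m x = s \<and> s \<noteq> 0}"
      have ndvd: "\<not> p dvd m"
      proof
        assume "p dvd m"
        then obtain q where "m = q * p" by (metis dvd_def mult.commute)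
        then have e1: "zsc m x = zsc q (zsc p x)" by (simp add: zsc_mult)
        have "zsc p x = 0" using x by (simp add: H_def)
        then have "zsc m x = 0" using e1 by simp
        then show False using x by simp
      qed
      have cop: "coprime m p" using prime_imp_coprime[OF p ndvd] by (simp add: coprime_commute)
      have "zsc p (x - y) = 0" using x y by (simp add: H_def zsc_diff)
      moreover have "zsc m (x - y) = 0" using x y by (simp add: zsc_diff)
      ultimately have "x - y = 0" using zsc_coprime cop by blast
      then show "x = y" by simp
    qed
    moreover have "countable (\<Union>m\<in>(UNIV::int set). \<Union>s\<in>G. {x\<in>H. zsc m x = s \<and> s \<noteq> 0})"
      using G calculation(2) by (intro countable_UN) auto
    ultimately show ?thesis by (meson countable_subset)
  qed
  obtain a :: "nat \<Rightarrow> 'a" where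
    A1: "\<forall>k. a k \<in> H \<and> a k \<notin> {0} \<and> a k \<notin> Bad (Gset a k)" and
    D: "\<forall>n K. (\<forall>i. \<bar>n i\<bar> \<le> int K * fact i) \<longrightarrow> (\<forall>N\<ge>K. dist (Ssum a n N) (Ssum a n K) < rad a K)"
    using construction[OF tg H0 cT HB] by blast
  define f where "f n = lim (\<lambda>N. Ssum a n N)" for n
  have p2: "p \<ge> 2" using p prime_ge_2_int by blast
  have bnd: "\<forall>i. \<bar>x i\<bar> \<le> int K * fact i" if "x \<in> ZpN p" "K \<ge> nat p" for x K
  proof
    fix i
    have "x i \<in> {0..<p}" using that by (auto simp: ZpN_def PiE_def Pi_def)
    then have "\<bar>x i\<bar> \<le> p" by auto
    also have "\<dots> \<le> int K" using that p2 by linarith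
    also have "\<dots> \<le> int K * fact i" using fact_ge_1[of i, where 'a=int] by (simp add: mult_le_cancel_left1)
    finally show "\<bar>x i\<bar> \<le> int K * fact i" .
  qed
  have lim: "(\<lambda>N. Ssum a x N) \<longlonglongrightarrow> f x" if "x \<in> ZpN p" for x
    using conv_lemma(1)[OF tg D bnd[OF that order_refl]] by (simp add: f_def)
  have ap: "zsc p (a i) = 0" for i using A1 by (simp add: H_def)
  have add: "f (ZpN_add p x y) = f x + f y" if "x \<in> ZpN p" "y \<in> ZpN p" for x y
  proof -
    have "Ssum a (ZpN_add p x y) N = Ssum a x N + Ssum a y N" for N
      unfolding Ssum_def ZpN_add_def
      by (simp add: zsc_mod[OF ap] zsc_add sum.distrib)
    then have "(\<lambda>N. Ssum a (ZpN_add p x y) N) \<longlonglongrightarrow> f x + f y"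
      using tg_add[OF tg lim[OF that(1)] lim[OF that(2)]] by simp
    then show ?thesis unfolding f_def by (rule limI)
  qed
  have inj: "inj_on f (ZpN p)"
  proof (rule inj_onI)
    fix x y assume x: "x \<in> ZpN p" and y: "y \<in> ZpN p" and fxy: "f x = f y"
    define z where "z = (\<lambda>k. (x k - y k) mod p)"
    have xr: "x k \<in> {0..<p}" "y k \<in> {0..<p}" for k using x y by (auto simp: ZpN_def PiE_def Pi_def)
    have z: "z \<in> ZpN p" using p2 by (auto simp: ZpN_def z_def)
    have "ZpN_add p z y = x"
    proof
      fix k
      have "((x k - y k) mod p + y k) mod p = x k mod p" by (simp add: mod_add_left_eq)
      also have "\<dots> = x k" using xr[of k] by simp
      finally show "ZpN_add p z y k = x k" by (simp add: ZpN_add_def z_def)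
    qed
    then have "f x = f z + f y" using add[OF z y] by simp
    then have fz: "f z = 0" using fxy by simp
    show "x = y"
    proof (rule ccontr)
      assume "x \<noteq> y"
      then obtain j where j: "x j \<noteq> y j" by blast
      have zj: "z j \<noteq> 0"
      proof
        assume "z j = 0"
        then have "p dvd (x j - y j)" by (simp add: z_def mod_eq_0_iff_dvd)
        moreover have "\<bar>x j - y j\<bar> < p" using xr[of j] by auto
        ultimately have "x j - y j = 0" using dvd_imp_le_int[of "x j - y j" p] p2 by fastforce
        then show False using j by simp
      qed
      define K where "K = max (nat p) (Suc j)"
      have bz: "\<forall>i. \<bar>z i\<bar> \<le> int K * fact i" using bnd[OF z] by (simp add: K_def)
      have "(\<lambda>N. Ssum a z N) \<longlonglongrightarrow> 0" using lim[OF z] fz by simp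
      then have "Ssum a z K = 0" by (rule nonzero_lemma[OF tg D bz])
      then have "zsc (z j) (a j) = 0" using indep[of a z K] A1 by (simp add: K_def)
      moreover have "\<not> p dvd z j"
      proof
        assume "p dvd z j"
        moreover have "0 \<le> z j" "z j < p" using z by (auto simp: ZpN_def PiE_def Pi_def)
        ultimately show False using zj dvd_imp_le_int[of "z j" p] p2 by fastforce
      qed
      then have "coprime (z j) p" using prime_imp_coprime[OF p] coprime_commute by blast
      ultimately have "a j = 0" using zsc_coprime[OF ap] by blast
      then show False using A1 by auto
    qed
  qed
  have cont: "continuous_map (ZpN_topology p) euclidean f"
    unfolding continuous_map_def
  proof (intro conjI allI impI)
    show "f \<in> topspace (ZpN_topology p) \<rightarrow> topspace euclidean" by simp
    fix U :: "'a set" assume "openin euclidean U"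
    then have oU: "open U" by simp
    show "openin (ZpN_topology p) {x \<in> topspace (ZpN_topology p). f x \<in> U}"
    proof (subst openin_subopen, intro ballI)
      fix x assume "x \<in> {x \<in> topspace (ZpN_topology p). f x \<in> U}"
      then have x: "x \<in> ZpN p" "f x \<in> U" by (auto simp: ZpN_topology_def ZpN_def)
      obtain e where e: "e > 0" "ball (f x) e \<subseteq> U" using oU x(2) openE by blast
      obtain K' where K': "(1/2::real)^K' < e/2" using real_arch_pow_inv[of "e/2" "1/2"] e by auto
      define K where "K = max (nat p) K'"
      have "(1/2::real)^K \<le> (1/2)^K'" unfolding K_def by (intro power_decreasing) auto
      then have rK: "2 * (1/2::real)^K < e" using K' by linarith
      define S where "S = (\<lambda>i. if i < K then {x i} else {0..<p})"
      have xS: "x \<in> PiE UNIV S" using x(1) by (auto simp: S_def ZpN_def PiE_def Pi_def)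
      have "openin (ZpN_topology p) (PiE UNIV S)"
        unfolding ZpN_topology_def openin_PiE_gen
      proof (intro disjI2 conjI ballI)
        have "{i \<in> UNIV. S i \<noteq> topspace (discrete_topology {0..<p})} \<subseteq> {..<K}" by (auto simp: S_def)
        then show "finite {i \<in> UNIV. S i \<noteq> topspace (discrete_topology {0..<p})}" by (rule finite_subset) simp
        fix i show "openin (discrete_topology {0..<p}) (S i)"
          using x(1) by (auto simp: S_def ZpN_def PiE_def Pi_def)
      qed
      moreover have "PiE UNIV S \<subseteq> {x \<in> topspace (ZpN_topology p). f x \<in> U}"
      proof
        fix y assume yS: "y \<in> PiE UNIV S"
        have yr: "y i \<in> {0..<p}" for i
        proof -
          have yi: "y i \<in> S i" using PiE_mem[OF yS] by simp
          have "x i \<in> {0..<p}" using x(1) by (auto simp: ZpN_def PiE_def Pi_def)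
          then show ?thesis using yi by (auto simp: S_def split: if_splits)
        qed
        have y: "y \<in> ZpN p" using yr by (auto simp: ZpN_def PiE_def Pi_def)
        have eq: "x i = y i" if "i < K" for i using PiE_mem[OF yS, of i] that by (simp add: S_def)
        have "dist (f x) (f y) \<le> 2 * (1/2)^K"
          unfolding f_def by (rule close_lemma[OF tg D bnd[OF x(1)] bnd[OF y] eq]) (auto simp: K_def)
        then have "f y \<in> ball (f x) e" using rK by simp
        then show "y \<in> {x \<in> topspace (ZpN_topology p). f x \<in> U}"
          using e(2) y by (auto simp: ZpN_topology_def ZpN_def)
      qed
      ultimately show "\<exists>T. openin (ZpN_topology p) T \<and> x \<in> T \<and> T \<subseteq> {x \<in> topspace (ZpN_topology p). f x \<in> U}"
        using xS by blast
    qed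
  qed
  show ?thesis unfolding ZpN_embeds_def using add inj cont by blast
qed

end


lemma ell1_diff_summable:
  assumes "x \<in> ell1Z" "y \<in> ell1Z"
  shows "summable (\<lambda>k. real_of_int \<bar>y k - x k\<bar> / fact k)"
proof (rule summable_comparison_test)
  show "summable (\<lambda>k. real_of_int \<bar>y k\<bar> / fact k + real_of_int \<bar>x k\<bar> / fact k)"
    using assms by (intro summable_add) (auto simp: ell1Z_def)
  show "\<exists>N. \<forall>n\<ge>N. norm (real_of_int \<bar>y n - x n\<bar> / fact n) \<le> real_of_int \<bar>y n\<bar> / fact n + real_of_int \<bar>x n\<bar> / fact n"
    by (intro exI[of _ 0] allI impI) (simp add: add_divide_distrib[symmetric] divide_right_mono)
qed

lemma zsc_sub: "zsc (a - b) x = zsc a x - zsc b x"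
  using zsc_add[of a "-b" x] zsc_neg[of b x] by simp

context
  fixes dummy :: "'a::{polish_space, ab_group_add} itself"
  assumes tg: "topological_group_ax TYPE('a)"
begin

lemma case1:
  assumes unc: "uncountable (UNIV::'a set)"
    and P: "\<forall>p::int. prime p \<longrightarrow> countable {x::'a. zsc p x = 0}"
  shows "ell1Z_embeds TYPE('a)"
proof -
  define H where "H = (UNIV::'a set)"
  have sub: "x - y \<in> H" if "x \<in> H" "y \<in> H" for x y by (simp add: H_def)
  have H0: "uncountable (U \<inter> H)" if "open U" "0 \<in> U" for U
    using uncountable_open[OF tg sub, of U 0] unc that by (auto simp: H_def)
  define T where "T = (\<Union>m\<in>{m::int. m \<noteq> 0}. {x::'a. zsc m x = 0})"
  have cT: "countable T" unfolding T_def using tors_count[OF P] by (intro countable_UN) auto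
  have HB: "countable (H \<inter> Bad G)" if G: "countable G" for G
  proof -
    have "H \<inter> Bad G \<subseteq> (\<Union>m\<in>{m::int. m \<noteq> 0}. \<Union>s\<in>G. {x. zsc m x = s})"
    proof
      fix x assume "x \<in> H \<inter> Bad G"
      then obtain m where m: "zsc m x \<noteq> 0" "zsc m x \<in> G" by (auto simp: Bad_def)
      then have "m \<noteq> 0" by auto
      then show "x \<in> (\<Union>m\<in>{m::int. m \<noteq> 0}. \<Union>s\<in>G. {x. zsc m x = s})" using m by auto
    qed
    moreover have "countable (\<Union>m\<in>{m::int. m \<noteq> 0}. \<Union>s\<in>G. {x::'a. zsc m x = s})"
      using G fiber_count[OF tors_count[OF P]] by (intro countable_UN) auto
    ultimately show ?thesis by (meson countable_subset)
  qed
  obtain a :: "nat \<Rightarrow> 'a" where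
    A1: "\<forall>k. a k \<in> H \<and> a k \<notin> T \<and> a k \<notin> Bad (Gset a k)" and
    D: "\<forall>n K. (\<forall>i. \<bar>n i\<bar> \<le> int K * fact i) \<longrightarrow> (\<forall>N\<ge>K. dist (Ssum a n N) (Ssum a n K) < rad a K)"
    using construction[OF tg H0 cT HB] by blast
  define f where "f n = lim (\<lambda>N. Ssum a n N)" for n
  have bmono: "\<forall>i. \<bar>x i\<bar> \<le> int K' * fact i" if "\<forall>i. \<bar>x i\<bar> \<le> int K * fact i" "K \<le> K'" for x K K'
  proof
    fix i
    have "int K * fact i \<le> int K' * fact i" using that(2) by (intro mult_right_mono) auto
    then show "\<bar>x i\<bar> \<le> int K' * fact i" using that(1) by (meson order_trans)
  qed
  have lim: "(\<lambda>N. Ssum a x N) \<longlonglongrightarrow> f x" if xe: "x \<in> ell1Z" for x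
  proof -
    obtain K where "\<forall>i. \<bar>x i\<bar> \<le> int K * fact i" using ell1_bound[OF xe] by blast
    then show ?thesis using conv_lemma(1)[OF tg D] by (simp add: f_def)
  qed
  have add: "f (\<lambda>k. x k + y k) = f x + f y" if "x \<in> ell1Z" "y \<in> ell1Z" for x y
  proof -
    have "Ssum a (\<lambda>k. x k + y k) N = Ssum a x N + Ssum a y N" for N
      unfolding Ssum_def by (simp add: zsc_add sum.distrib)
    then have "(\<lambda>N. Ssum a (\<lambda>k. x k + y k) N) \<longlonglongrightarrow> f x + f y"
      using tg_add[OF tg lim[OF that(1)] lim[OF that(2)]] by simp
    then show ?thesis unfolding f_def by (rule limI)
  qed
  have inj: "inj_on f ell1Z"
  proof (rule inj_onI)
    fix x y assume x: "x \<in> ell1Z" and y: "y \<in> ell1Z" and fxy: "f x = f y"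
    define z where "z = (\<lambda>k. x k - y k)"
    have "Ssum a z N = Ssum a x N - Ssum a y N" for N
      unfolding Ssum_def z_def by (simp add: zsc_sub sum_subtractf)
    then have Lz: "(\<lambda>N. Ssum a z N) \<longlonglongrightarrow> 0"
      using tg_diff[OF tg lim[OF x] lim[OF y]] fxy by simp
    obtain Kx where Kx: "\<forall>i. \<bar>x i\<bar> \<le> int Kx * fact i" using ell1_bound[OF x] by blast
    obtain Ky where Ky: "\<forall>i. \<bar>y i\<bar> \<le> int Ky * fact i" using ell1_bound[OF y] by blast
    show "x = y"
    proof (rule ccontr)
      assume "x \<noteq> y"
      then obtain j where j: "x j \<noteq> y j" by blast
      define K where "K = max (Kx + Ky) (Suc j)"
      have bz: "\<forall>i. \<bar>z i\<bar> \<le> int K * fact i"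
      proof
        fix i
        have "\<bar>z i\<bar> \<le> \<bar>x i\<bar> + \<bar>y i\<bar>" by (simp add: z_def)
        also have "\<dots> \<le> int Kx * fact i + int Ky * fact i" using Kx Ky by (meson add_mono)
        also have "\<dots> = int (Kx + Ky) * fact i" by (simp add: algebra_simps)
        also have "\<dots> \<le> int K * fact i" by (intro mult_right_mono) (auto simp: K_def)
        finally show "\<bar>z i\<bar> \<le> int K * fact i" .
      qed
      have "Ssum a z K = 0" by (rule nonzero_lemma[OF tg D bz Lz])
      then have "zsc (z j) (a j) = 0" using indep[of a z K] A1 by (simp add: K_def)
      moreover have "z j \<noteq> 0" using j by (simp add: z_def)
      ultimately have "a j \<in> T" unfolding T_def by blast
      then show False using A1 by blast
    qed
  qed
  have cont: "\<forall>x\<in>ell1Z. \<forall>U. open U \<and> f x \<in> U \<longrightarrow>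
          (\<exists>d>0. \<forall>y\<in>ell1Z. ell1_norm (\<lambda>k. y k - x k) < d \<longrightarrow> f y \<in> U)"
  proof (intro ballI allI impI)
    fix x U assume x: "x \<in> ell1Z" and U: "open U \<and> f x \<in> U"
    obtain e where e: "e > 0" "ball (f x) e \<subseteq> U" using U openE by blast
    obtain Kx where Kx: "\<forall>i. \<bar>x i\<bar> \<le> int Kx * fact i" using ell1_bound[OF x] by blast
    obtain K' where K': "(1/2::real)^K' < e/2" using real_arch_pow_inv[of "e/2" "1/2"] e by auto
    define K where "K = max (Kx + 1) K'"
    have "(1/2::real)^K \<le> (1/2)^K'" unfolding K_def by (intro power_decreasing) auto
    then have rK: "2 * (1/2::real)^K < e" using K' by linarith
    have "\<forall>y\<in>ell1Z. ell1_norm (\<lambda>k. y k - x k) < 1 / fact K \<longrightarrow> f y \<in> U"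
    proof (intro ballI impI)
      fix y assume y: "y \<in> ell1Z" and dn: "ell1_norm (\<lambda>k. y k - x k) < 1 / fact K"
      have s: "summable (\<lambda>k. real_of_int \<bar>y k - x k\<bar> / fact k)" by (rule ell1_diff_summable[OF x y])
      have tb: "real_of_int \<bar>y i - x i\<bar> < fact i / fact K" for i
      proof -
        have "real_of_int \<bar>y i - x i\<bar> / fact i \<le> ell1_norm (\<lambda>k. y k - x k)"
          unfolding ell1_norm_def using sum_le_suminf[OF s, of "{i}"] by simp
        then have "real_of_int \<bar>y i - x i\<bar> / fact i < 1 / fact K" using dn by linarith
        then show ?thesis by (simp add: divide_less_eq field_simps)
      qed
      have eq: "x i = y i" if "i < K" for i
      proof -
        have "(fact i::real) \<le> fact K" using that by (intro fact_mono) auto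
        then have "fact i / fact K \<le> (1::real)" by simp
        then have "real_of_int \<bar>y i - x i\<bar> < 1" using tb[of i] by linarith
        then show ?thesis by simp
      qed
      have by': "\<forall>i. \<bar>y i\<bar> \<le> int K * fact i"
      proof
        fix i
        have "fact i / fact K \<le> (fact i::real)" using fact_ge_1[of K, where 'a=real]
          by (simp add: divide_le_eq mult_le_cancel_left1)
        then have "real_of_int \<bar>y i - x i\<bar> < real_of_int (fact i)" using tb[of i] by simp
        then have "\<bar>y i - x i\<bar> < fact i" by linarith
        then have "\<bar>y i\<bar> \<le> int Kx * fact i + fact i" using Kx by (smt (verit))
        also have "\<dots> = int (Kx + 1) * fact i" by (simp add: algebra_simps)
        also have "\<dots> \<le> int K * fact i" by (intro mult_right_mono) (auto simp: K_def)
        finally show "\<bar>y i\<bar> \<le> int K * fact i" .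
      qed
      have bx': "\<forall>i. \<bar>x i\<bar> \<le> int K * fact i" using bmono[OF Kx] by (simp add: K_def)
      have "dist (f x) (f y) \<le> 2 * (1/2)^K"
        unfolding f_def by (rule close_lemma[OF tg D bx' by' eq])
      then have "f y \<in> ball (f x) e" using rK by simp
      then show "f y \<in> U" using e(2) by blast
    qed
    then show "\<exists>d>0. \<forall>y\<in>ell1Z. ell1_norm (\<lambda>k. y k - x k) < d \<longrightarrow> f y \<in> U"
      by (intro exI[of _ "1 / fact K"]) auto
  qed
  show ?thesis unfolding ell1Z_embeds_def using add inj cont by blast
qed

end

theorem theorem4p2:
  assumes "topological_group_ax TYPE('a::{polish_space, ab_group_add})"
    and "uncountable (UNIV :: 'a set)"
  shows "ell1Z_embeds TYPE('a) \<or> (\<exists>p::int. prime p \<and> ZpN_embeds p TYPE('a))"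
proof (cases "\<exists>p::int. prime p \<and> uncountable {x::'a. zsc p x = 0}")
  case True
  then obtain p :: int where "prime p" "uncountable {x::'a. zsc p x = 0}" by blast
  then show ?thesis using case2[OF assms(1)] by blast
next
  case False
  then show ?thesis using case1[OF assms] by blast
qed


end
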